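(* Let $\mathcal{P}=\langle\mathcal{A}\mid\mathcal{R}\rangle$ be a presentation with $\mathcal{A}$ finite (and $\mathcal{R}$ possibly infinite), equipped with an index $\|\cdot\|:\mathcal{R}\to\mathbb{N}$, and let $(\alpha,\pi)$ be an area-penetration pair for $(\mathcal{P},\|\cdot\|)$. Let $\mathcal{S}$ be a set of words over $\mathcal{A}^{\pm1}$ whose normal closure in the free group $F(\mathcal{A})$ equals that of $\mathcal{R}$, let $\mathcal{Q}=\langle\mathcal{A}\mid\mathcal{S}\rangle$, and let $\mathrm{RArea}$ be the relational area function of $(\mathcal{P},\|\cdot\|)$ over $\mathcal{Q}$. Then for all $n$, $\delta_{\mathcal{Q}}(n)\le \alpha(n)\,\mathrm{RArea}(\pi(n))$.
   Context: An index on $\mathcal{R}$ is any function $\|\cdot\|:\mathcal{R}\to\mathbb{N}$, extended by $\|r^{-1}\|=\|r\|$. For a word $w$ over $\mathcal{A}^{\pm1}$ representing the identity, a null-$\mathcal{P}$-expression is a sequence $(x_i,r_i)_{i=1}^m$, $x_i$ words, $r_i\in\mathcal{R}^{\pm1}$, with $w$ freely equal to $\prod_{i=1}^m x_ir_ix_i^{-1}$; its area is $m$. A pair $(\alpha,\pi)$ of functions $\mathbb{N}\to\mathbb{N}$ is an area-penetration pair for $(\mathcal{P},\|\cdot\|)$ if every null-homotopic word $w$ with $|w|\le n$ admits a null-$\mathcal{P}$-expression $(x_i,r_i)_{i=1}^m$ with $m\le\alpha(n)$ and $\|r_i\|\le\pi(n)$ for all $i$. $\mathrm{Area}_{\mathcal{Q}}(w)$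 is the minimal area of a null-$\mathcal{Q}$-expression for $w$, and the Dehn function is $\delta_{\mathcal{Q}}(n)=\max\{\mathrm{Area}_{\mathcal{Q}}(w): w \text{ null-homotopic}, |w|\le n\}$. The relational area function of $(\mathcal{P},\|\cdot\|)$ over $\mathcal{Q}$ is $\mathrm{RArea}(n)=\max\{\mathrm{Area}_{\mathcal{Q}}(r): r\in\mathcal{R},\ \|r\|\le n\}\in\mathbb{N}\cup\{\infty\}$. *)

theory Defs
  imports Main "HOL-Library.Extended_Nat"
begin

text \<open>Letters of A^{+-1}: (a, False) is a, (a, True) is a^{-1}. Words are lists of letters.\<close>
type_synonym 'a letter = "'a \<times> bool"
type_synonym 'a word = "'a letter list"

definition inv_letter :: "'a letter \<Rightarrow> 'a letter" where
  "inv_letter l = (fst l, \<not> snd l)"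

definition inv_word :: "'a word \<Rightarrow> 'a word" where
  "inv_word w = rev (map inv_letter w)"

definition word_over :: "'a set \<Rightarrow> 'a word \<Rightarrow> bool" where
  "word_over A w \<longleftrightarrow> (\<forall>l \<in> set w. fst l \<in> A)"

definition reduce1 :: "'a word \<Rightarrow> 'a word \<Rightarrow> bool" where
  "reduce1 u v \<longleftrightarrow> (\<exists>p q x. u = p @ [x, inv_letter x] @ q \<and> v = p @ q)"

definition free_eq :: "'a word \<Rightarrow> 'a word \<Rightarrow> bool" where
  "free_eq = equivclp reduce1"

text \<open>A term (x, r, e) of an expression stands for x r^{\<epsilon>} x^{-1}, with r \<in> R and
  e = True meaning the formal inverse r^{-1}.\<close>
definition rel_power :: "'a word \<Rightarrow> bool \<Rightarrow> 'a word" where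
  "rel_power r e = (if e then inv_word r else r)"

definition expr_word :: "('a word \<times> 'a word \<times> bool) list \<Rightarrow> 'a word" where
  "expr_word es = concat (map (\<lambda>(x, r, e). x @ rel_power r e @ inv_word x) es)"

text \<open>Null-P-expression for w, P = <A | R>; its area is the length of the list.\<close>
definition null_expr :: "'a set \<Rightarrow> 'a word set \<Rightarrow> 'a word \<Rightarrow> ('a word \<times> 'a word \<times> bool) list \<Rightarrow> bool" where
  "null_expr A R w es \<longleftrightarrow>
     (\<forall>(x, r, e) \<in> set es. word_over A x \<and> r \<in> R) \<and> free_eq w (expr_word es)"

definition null_homotopic :: "'a set \<Rightarrow> 'a word set \<Rightarrow> 'a word \<Rightarrow> bool" where
  "null_homotopic A R w \<longleftrightarrow> word_over A w \<and> (\<exists>es. null_expr A R w es)"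

definition normal_closure_words :: "'a set \<Rightarrow> 'a word set \<Rightarrow> 'a word set" where
  "normal_closure_words A R = {w. null_homotopic A R w}"

definition area_penetration_pair ::
  "'a set \<Rightarrow> 'a word set \<Rightarrow> ('a word \<Rightarrow> nat) \<Rightarrow> (nat \<Rightarrow> nat) \<Rightarrow> (nat \<Rightarrow> nat) \<Rightarrow> bool" where
  "area_penetration_pair A R idx \<alpha> \<pi> \<longleftrightarrow>
     (\<forall>n w. null_homotopic A R w \<and> length w \<le> n \<longrightarrow>
        (\<exists>es. null_expr A R w es \<and> length es \<le> \<alpha> n \<and>
              (\<forall>(x, r, e) \<in> set es. idx r \<le> \<pi> n)))"

text \<open>Area (infinite if no null-expression exists).\<close>
definition Area :: "'a set \<Rightarrow> 'a word set \<Rightarrow> 'a word \<Rightarrow> enat" where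
  "Area A S w = Inf {enat (length es) | es. null_expr A S w es}"

definition Dehn :: "'a set \<Rightarrow> 'a word set \<Rightarrow> nat \<Rightarrow> enat" where
  "Dehn A S n = Sup {Area A S w | w. null_homotopic A S w \<and> length w \<le> n}"

definition RArea :: "'a set \<Rightarrow> 'a word set \<Rightarrow> ('a word \<Rightarrow> nat) \<Rightarrow> 'a word set \<Rightarrow> nat \<Rightarrow> enat" where
  "RArea A R idx S n = Sup {Area A S r | r. r \<in> R \<and> idx r \<le> n}"

end

theory Submission
  imports Defs
begin

lemma reduce1_ctx: "reduce1 u v \<Longrightarrow> reduce1 (p @ u @ q) (p @ v @ q)"
  unfolding reduce1_def
  by (metis append.assoc)

lemma free_eq_ctx: "free_eq u v \<Longrightarrow> free_eq (p @ u @ q) (p @ v @ q)"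
  unfolding free_eq_def
proof (induction rule: equivclp_induct)
  case base
  then show ?case by simp
next
  case (step y z)
  then show ?case using reduce1_ctx
    by (metis equivclp_into_equivclp)
qed

lemma free_eq_refl[simp]: "free_eq u u"
  unfolding free_eq_def by simp

lemma free_eq_sym: "free_eq u v \<Longrightarrow> free_eq v u"
  unfolding free_eq_def by (rule equivclp_sym)

lemma free_eq_trans: "free_eq u v \<Longrightarrow> free_eq v w \<Longrightarrow> free_eq u w"
  unfolding free_eq_def by (rule equivclp_trans)

lemma free_eq_app: "free_eq a b \<Longrightarrow> free_eq c d \<Longrightarrow> free_eq (a @ c) (b @ d)"
proof -
  assume 1: "free_eq a b" and 2: "free_eq c d"
  have "free_eq ([] @ a @ c) ([] @ b @ c)" using free_eq_ctx[OF 1] .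
  moreover have "free_eq (b @ c @ []) (b @ d @ [])" using free_eq_ctx[OF 2] .
  ultimately show ?thesis using free_eq_trans by simp
qed

lemma inv_letter_inv[simp]: "inv_letter (inv_letter x) = x"
  unfolding inv_letter_def by simp

lemma inv_word_append[simp]: "inv_word (a @ b) = inv_word b @ inv_word a"
  unfolding inv_word_def by simp

lemma inv_word_inv[simp]: "inv_word (inv_word a) = a"
  unfolding inv_word_def by (simp add: rev_map comp_def)

lemma inv_word_Nil[simp]: "inv_word [] = []"
  unfolding inv_word_def by simp

lemma inv_word_Cons: "inv_word (x # a) = inv_word a @ [inv_letter x]"
  unfolding inv_word_def by simp

lemma reduce1_inv: "reduce1 u v \<Longrightarrow> reduce1 (inv_word u) (inv_word v)"
proof -
  assume "reduce1 u v"
  then obtain p q x where u: "u = p @ [x, inv_letter x] @ q" and v: "v = p @ q"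
    unfolding reduce1_def by blast
  have "inv_word u = inv_word q @ [x, inv_letter x] @ inv_word p"
    using u by (simp add: inv_word_def)
  moreover have "inv_word v = inv_word q @ inv_word p" using v by simp
  ultimately show ?thesis unfolding reduce1_def by blast
qed

lemma free_eq_inv: "free_eq u v \<Longrightarrow> free_eq (inv_word u) (inv_word v)"
  unfolding free_eq_def
proof (induction rule: equivclp_induct)
  case base
  then show ?case by simp
next
  case (step y z)
  then show ?case using reduce1_inv
    by (metis equivclp_into_equivclp)
qed

lemma free_eq_cancel: "free_eq (u @ inv_word u) []"
proof (induction u)
  case Nil
  then show ?case by simp
next
  case (Cons a u)
  have "free_eq ([a] @ (u @ inv_word u) @ [inv_letter a]) ([a] @ [] @ [inv_letter a])"
    using free_eq_ctx[OF Cons.IH] .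
  moreover have "reduce1 ([a] @ [] @ [inv_letter a]) []"
    unfolding reduce1_def by (rule exI[of _ "[]"], rule exI[of _ "[]"], auto)
  ultimately show ?case unfolding free_eq_def
    by (simp add: inv_word_Cons equivclp_into_equivclp)
qed

lemma free_eq_cancel': "free_eq (inv_word u @ u) []"
  using free_eq_cancel[of "inv_word u"] by simp


lemma expr_word_Nil[simp]: "expr_word [] = []"
  unfolding expr_word_def by simp

lemma expr_word_Cons[simp]: "expr_word ((x, r, e) # es) = x @ rel_power r e @ inv_word x @ expr_word es"
  unfolding expr_word_def by simp

lemma expr_word_append[simp]: "expr_word (a @ b) = expr_word a @ expr_word b"
  unfolding expr_word_def by simp

definition conj_expr :: "'a word \<Rightarrow> ('a word \<times> 'a word \<times> bool) list \<Rightarrow> ('a word \<times> 'a word \<times> bool) list" where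
  "conj_expr x fs = map (\<lambda>(y, s, e). (x @ y, s, e)) fs"

definition inv_expr :: "('a word \<times> 'a word \<times> bool) list \<Rightarrow> ('a word \<times> 'a word \<times> bool) list" where
  "inv_expr fs = rev (map (\<lambda>(y, s, e). (y, s, \<not> e)) fs)"

lemma inv_rel_power: "inv_word (rel_power s e) = rel_power s (\<not> e)"
  unfolding rel_power_def by simp

lemma expr_word_inv: "expr_word (inv_expr fs) = inv_word (expr_word fs)"
proof (induction fs)
  case Nil
  then show ?case by (simp add: inv_expr_def)
next
  case (Cons a fs)
  obtain y s e where a: "a = (y, s, e)" by (cases a) auto
  have "inv_expr (a # fs) = inv_expr fs @ [(y, s, \<not> e)]"
    by (simp add: inv_expr_def a)
  then show ?case using Cons.IH by (simp add: a inv_rel_power)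
qed

lemma expr_word_conj: "free_eq (expr_word (conj_expr x fs)) (x @ expr_word fs @ inv_word x)"
proof (induction fs)
  case Nil
  then show ?case by (simp add: conj_expr_def free_eq_sym free_eq_cancel)
next
  case (Cons a fs)
  obtain y s e where a: "a = (y, s, e)" by (cases a) auto
  let ?t = "y @ rel_power s e @ inv_word y"
  have "expr_word (conj_expr x (a # fs)) = (x @ ?t @ inv_word x) @ expr_word (conj_expr x fs)"
    by (simp add: conj_expr_def a)
  also have "free_eq \<dots> ((x @ ?t @ inv_word x) @ (x @ expr_word fs @ inv_word x))"
    using free_eq_app[OF free_eq_refl Cons.IH] .
  finally have 1: "free_eq (expr_word (conj_expr x (a # fs))) ((x @ ?t) @ (inv_word x @ x) @ (expr_word fs @ inv_word x))"
    by simp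
  have "free_eq ((x @ ?t) @ (inv_word x @ x) @ (expr_word fs @ inv_word x)) ((x @ ?t) @ [] @ (expr_word fs @ inv_word x))"
    using free_eq_ctx[OF free_eq_cancel'] .
  with 1 show ?case using free_eq_trans by (simp add: a)
qed


lemma word_over_append: "word_over A x \<Longrightarrow> word_over A y \<Longrightarrow> word_over A (x @ y)"
  unfolding word_over_def by auto

lemma term_replace:
  assumes x: "word_over A x" and fs: "null_expr A S r fs"
  shows "\<exists>gs. (\<forall>(y, s, e) \<in> set gs. word_over A y \<and> s \<in> S) \<and>
    free_eq (x @ rel_power r e @ inv_word x) (expr_word gs) \<and> length gs = length fs"
proof -
  define fs' where "fs' = (if e then inv_expr fs else fs)"
  have fsS: "\<forall>(y, s, e) \<in> set fs. word_over A y \<and> s \<in> S" and r: "free_eq r (expr_word fs)"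
    using fs unfolding null_expr_def by auto
  have fs'S: "\<forall>(y, s, e) \<in> set fs'. word_over A y \<and> s \<in> S"
    using fsS unfolding fs'_def inv_expr_def by auto
  have len: "length fs' = length fs" unfolding fs'_def inv_expr_def by simp
  have rp: "free_eq (rel_power r e) (expr_word fs')"
    using r free_eq_inv[OF r] unfolding fs'_def rel_power_def by (simp add: expr_word_inv)
  have "free_eq (x @ rel_power r e @ inv_word x) (x @ expr_word fs' @ inv_word x)"
    using free_eq_ctx[OF rp] .
  then have "free_eq (x @ rel_power r e @ inv_word x) (expr_word (conj_expr x fs'))"
    using free_eq_trans free_eq_sym expr_word_conj by metis
  moreover have "\<forall>(y, s, e) \<in> set (conj_expr x fs'). word_over A y \<and> s \<in> S"
    using fs'S x unfolding conj_expr_def by (auto intro: word_over_append)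
  moreover have "length (conj_expr x fs') = length fs" using len by (simp add: conj_expr_def)
  ultimately show ?thesis by blast
qed

lemma replace_all:
  assumes "\<forall>(x, r, e) \<in> set es. word_over A x \<and> r \<in> R \<and> idx r \<le> p"
    and K: "\<forall>r \<in> R. idx r \<le> p \<longrightarrow> (\<exists>fs. null_expr A S r fs \<and> length fs \<le> K)"
  shows "\<exists>gs. (\<forall>(y, s, e) \<in> set gs. word_over A y \<and> s \<in> S) \<and>
    free_eq (expr_word es) (expr_word gs) \<and> length gs \<le> length es * K"
  using assms(1)
proof (induction es)
  case Nil
  then show ?case by (intro exI[of _ "[]"]) simp
next
  case (Cons a es)
  obtain x r e where a: "a = (x, r, e)" by (cases a) auto
  from Cons.prems a have x: "word_over A x" and rR: "r \<in> R" "idx r \<le> p" by auto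
  from K rR obtain fs where fs: "null_expr A S r fs" "length fs \<le> K" by blast
  from term_replace[OF x fs(1), of e] obtain hs where
    hs: "\<forall>(y, s, e) \<in> set hs. word_over A y \<and> s \<in> S"
      "free_eq (x @ rel_power r e @ inv_word x) (expr_word hs)" "length hs = length fs" by blast
  from Cons obtain gs where gs: "\<forall>(y, s, e) \<in> set gs. word_over A y \<and> s \<in> S"
    "free_eq (expr_word es) (expr_word gs)" "length gs \<le> length es * K" by auto
  have "free_eq (expr_word (a # es)) (expr_word (hs @ gs))"
    using free_eq_app[OF hs(2) gs(2)] by (simp add: a)
  moreover have "length (hs @ gs) \<le> length (a # es) * K" using hs(3) fs(2) gs(3) by simp
  moreover have "\<forall>(y, s, e) \<in> set (hs @ gs). word_over A y \<and> s \<in> S" using hs(1) gs(1) by auto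
  ultimately show ?case by blast
qed

lemma Area_le: "null_expr A S w es \<Longrightarrow> Area A S w \<le> enat (length es)"
  unfolding Area_def by (rule Inf_lower) blast

lemma Area_bound: "Area A S w \<le> enat K \<Longrightarrow> \<exists>es. null_expr A S w es \<and> length es \<le> K"
proof -
  assume "Area A S w \<le> enat K"
  then have "Area A S w < enat (Suc K)" by (simp add: order_le_less_trans)
  then obtain v where "v \<in> {enat (length es) | es. null_expr A S w es}" "v < enat (Suc K)"
    unfolding Area_def Inf_less_iff by blast
  then show ?thesis by auto
qed

theorem proposition2p8:
  fixes A :: "'a set" and R S :: "'a word set" and idx :: "'a word \<Rightarrow> nat"
    and \<alpha> \<pi> :: "nat \<Rightarrow> nat"
  assumes "finite A"
    and "\<forall>r \<in> R. word_over A r"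
    and "\<forall>s \<in> S. word_over A s"
    and "area_penetration_pair A R idx \<alpha> \<pi>"
    and "normal_closure_words A S = normal_closure_words A R"
  shows "\<forall>n. Dehn A S n \<le> enat (\<alpha> n) * RArea A R idx S (\<pi> n)"
proof
  fix n
  show "Dehn A S n \<le> enat (\<alpha> n) * RArea A R idx S (\<pi> n)"
    unfolding Dehn_def
  proof (rule Sup_least)
    fix v assume "v \<in> {Area A S w | w. null_homotopic A S w \<and> length w \<le> n}"
    then obtain w where v: "v = Area A S w" and wS: "null_homotopic A S w" and wl: "length w \<le> n"
      by blast
    have "null_homotopic A R w" using wS assms(5) unfolding normal_closure_words_def by blast
    with assms(4) wl obtain es where es: "null_expr A R w es" "length es \<le> \<alpha> n"
      "\<forall>(x, r, e) \<in> set es. idx r \<le> \<pi> n"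
      unfolding area_penetration_pair_def by blast
    have esR: "\<forall>(x, r, e) \<in> set es. word_over A x \<and> r \<in> R \<and> idx r \<le> \<pi> n"
      using es(1,3) unfolding null_expr_def by auto
    have wes: "free_eq w (expr_word es)" using es(1) unfolding null_expr_def by auto
    show "v \<le> enat (\<alpha> n) * RArea A R idx S (\<pi> n)"
    proof (cases "\<alpha> n = 0")
      case True
      then have "es = []" using es(2) by simp
      then have "null_expr A S w []" using wes unfolding null_expr_def by simp
      from Area_le[OF this] True v show ?thesis by (simp flip: zero_enat_def)
    next
      case False
      show ?thesis
      proof (cases "RArea A R idx S (\<pi> n)")
        case infinity
        then show ?thesis using False by simp
      next
        case (enat K)
        have KK: "\<forall>r \<in> R. idx r \<le> \<pi> n \<longrightarrow> (\<exists>fs. null_expr A S r fs \<and> length fs \<le> K)"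
        proof (intro ballI impI)
          fix r assume r: "r \<in> R" "idx r \<le> \<pi> n"
          have "Area A S r \<le> RArea A R idx S (\<pi> n)"
            unfolding RArea_def by (rule Sup_upper) (use r in blast)
          with enat show "\<exists>fs. null_expr A S r fs \<and> length fs \<le> K"
            using Area_bound by simp
        qed
        from replace_all[OF esR KK] obtain gs where
          gs: "\<forall>(y, s, e) \<in> set gs. word_over A y \<and> s \<in> S"
            "free_eq (expr_word es) (expr_word gs)" "length gs \<le> length es * K" by blast
        have "null_expr A S w gs" using gs(1,2) wes free_eq_trans unfolding null_expr_def by blast
        then have "v \<le> enat (length gs)" using Area_le v by blast
        also have "\<dots> \<le> enat (\<alpha> n * K)"
          using gs(3) es(2) by (meson enat_ord_simps(1) le_trans mult_le_mono1)
        finally show ?thesis using enat by simp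
      qed
    qed
  qed
qed

end
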